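(* Let $(P,A,\lambda)$ be a marked poset with $A$ linearly ordered, let $(U_1,U_2)$ be an admissible decomposition, and let $\lambda,\mu:A\to\mathbb{Z}_{\ge0}$ be two markings of $A$. Then $S_{U_1,U_2}(\lambda)+S_{U_1,U_2}(\mu)=S_{U_1,U_2}(\lambda+\mu)$ (Minkowski sum).
   Context: A marked poset is a triple $(P,A,\lambda)$ where $(P,\prec)$ is a finite poset, $A\subseteq P$ contains all minimal and all maximal elements of $P$, and $\lambda:A\to\mathbb{Z}_{\ge 0}$, $a\mapsto\lambda_a$. A decomposition of $(P,A,\lambda)$ is a pair $(U_1,U_2)$ of disjoint sets with $U_1\cup U_2=P\setminus A$; it is admissible if there are no $u_1\in U_1$, $u_2\in U_2$ with $u_1\prec u_2$. Put $A_1=A\cup U_1$. For a marking $\lambda$, the marked chain-order polytope $\mathcal{CO}_{U_1,U_2}(\lambda)\subset\mathbb{R}^{P\setminus A}$ is the set of $(x_p)_{p\in P\setminus A}$ such that: (i) $x_p\le\lambda_a$ whenever $p\in U_1$, $a\in A$, $p\prec a$; (ii) $\lambda_b\le x_q$ whenever $q\in U_1$, $b\in A$, $b\prec q$; (iii) $x_p\le x_q$ whenever $p,q\in U_1$, $p\prec q$; (iv) $x_p\ge0$ for $p\in U_2$; (v) for every chain $b\prec p_n\prec\cdots\prec p_1\prec a$ with $n\ge1$, $a,b\in A_1$, $p_i\in U_2$: $x_{p_1}+\cdots+x_{p_n}\le\lambda_a-\lambda_b$, where $\lambda_q$ means $x_q$ for $q\in U_1$; (vi) for every chain $p_1\prec\cdots\prec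 p_s\prec q$ with $q\in U_1$, $p_i\in U_2$: $x_{p_1}+\cdots+x_{p_s}\le x_q$. Set $S_{U_1,U_2}(\lambda)=\mathcal{CO}_{U_1,U_2}(\lambda)\cap\mathbb{Z}_{\ge0}^{P\setminus A}$.
   Formalization: The markings $\lambda$ and $\mu$ are also order-preserving on A: $\lambda_a\le\lambda_b$ and $\mu_a\le\mu_b$ whenever $a\prec b$ in A. The statement above fails without it. *)

theory Defs
  imports Complex_Main
begin

definition strict_poset :: "'a set \<Rightarrow> ('a \<Rightarrow> 'a \<Rightarrow> bool) \<Rightarrow> bool" where
  "strict_poset P lt \<longleftrightarrow> finite P
     \<and> (\<forall>p\<in>P. \<not> lt p p)
     \<and> (\<forall>p\<in>P. \<forall>q\<in>P. \<forall>r\<in>P. lt p q \<longrightarrow> lt q r \<longrightarrow> lt p r)"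

definition minimal_elt :: "'a set \<Rightarrow> ('a \<Rightarrow> 'a \<Rightarrow> bool) \<Rightarrow> 'a \<Rightarrow> bool" where
  "minimal_elt P lt p \<longleftrightarrow> p \<in> P \<and> (\<forall>q\<in>P. \<not> lt q p)"

definition maximal_elt :: "'a set \<Rightarrow> ('a \<Rightarrow> 'a \<Rightarrow> bool) \<Rightarrow> 'a \<Rightarrow> bool" where
  "maximal_elt P lt p \<longleftrightarrow> p \<in> P \<and> (\<forall>q\<in>P. \<not> lt p q)"

definition marking :: "'a set \<Rightarrow> ('a \<Rightarrow> 'a \<Rightarrow> bool) \<Rightarrow> ('a \<Rightarrow> int) \<Rightarrow> bool" where
  "marking A lt lam \<longleftrightarrow> (\<forall>a\<in>A. 0 \<le> lam a) \<and> (\<forall>a\<in>A. \<forall>b\<in>A. lt a b \<longrightarrow> lam a \<le> lam b)"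

definition marked_poset :: "'a set \<Rightarrow> ('a \<Rightarrow> 'a \<Rightarrow> bool) \<Rightarrow> 'a set \<Rightarrow> ('a \<Rightarrow> int) \<Rightarrow> bool" where
  "marked_poset P lt A lam \<longleftrightarrow> strict_poset P lt \<and> A \<subseteq> P
     \<and> (\<forall>p. minimal_elt P lt p \<longrightarrow> p \<in> A)
     \<and> (\<forall>p. maximal_elt P lt p \<longrightarrow> p \<in> A)
     \<and> marking A lt lam"

definition admissible_decomp ::
  "'a set \<Rightarrow> ('a \<Rightarrow> 'a \<Rightarrow> bool) \<Rightarrow> 'a set \<Rightarrow> 'a set \<Rightarrow> 'a set \<Rightarrow> bool" where
  "admissible_decomp P lt A U1 U2 \<longleftrightarrow> U1 \<inter> U2 = {} \<and> U1 \<union> U2 = P - A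
     \<and> \<not> (\<exists>u1\<in>U1. \<exists>u2\<in>U2. lt u1 u2)"

definition mval :: "'a set \<Rightarrow> ('a \<Rightarrow> 'b) \<Rightarrow> ('a \<Rightarrow> 'b) \<Rightarrow> 'a \<Rightarrow> 'b" where
  "mval U1 lam x q = (if q \<in> U1 then x q else lam q)"

text \<open>Points of R^(P - A) are functions vanishing outside P - A.
  The marked chain-order polytope (here: real points).\<close>
definition CO :: "'a set \<Rightarrow> ('a \<Rightarrow> 'a \<Rightarrow> bool) \<Rightarrow> 'a set \<Rightarrow> 'a set \<Rightarrow> 'a set
    \<Rightarrow> ('a \<Rightarrow> int) \<Rightarrow> ('a \<Rightarrow> real) set" where
  "CO P lt A U1 U2 lam = {x. (\<forall>p. p \<notin> P - A \<longrightarrow> x p = 0)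
     \<and> (\<forall>p\<in>U1. \<forall>a\<in>A. lt p a \<longrightarrow> x p \<le> of_int (lam a))
     \<and> (\<forall>q\<in>U1. \<forall>b\<in>A. lt b q \<longrightarrow> of_int (lam b) \<le> x q)
     \<and> (\<forall>p\<in>U1. \<forall>q\<in>U1. lt p q \<longrightarrow> x p \<le> x q)
     \<and> (\<forall>p\<in>U2. 0 \<le> x p)
     \<and> (\<forall>a\<in>A \<union> U1. \<forall>b\<in>A \<union> U1. \<forall>ps. ps \<noteq> [] \<longrightarrow> set ps \<subseteq> U2
          \<longrightarrow> sorted_wrt lt (b # ps @ [a])
          \<longrightarrow> sum_list (map x ps) \<le> mval U1 (\<lambda>q. of_int (lam q)) x a - mval U1 (\<lambda>q. of_int (lam q)) x b)
     \<and> (\<forall>q\<in>U1. \<forall>ps. ps \<noteq> [] \<longrightarrow> set ps \<subseteq> U2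
          \<longrightarrow> sorted_wrt lt (ps @ [q])
          \<longrightarrow> sum_list (map x ps) \<le> x q)}"

definition S_CO :: "'a set \<Rightarrow> ('a \<Rightarrow> 'a \<Rightarrow> bool) \<Rightarrow> 'a set \<Rightarrow> 'a set \<Rightarrow> 'a set
    \<Rightarrow> ('a \<Rightarrow> int) \<Rightarrow> ('a \<Rightarrow> int) set" where
  "S_CO P lt A U1 U2 lam = {x. (\<forall>p\<in>P - A. 0 \<le> x p) \<and> (\<lambda>p. real_of_int (x p)) \<in> CO P lt A U1 U2 lam}"

definition minkowski :: "('a \<Rightarrow> int) set \<Rightarrow> ('a \<Rightarrow> int) set \<Rightarrow> ('a \<Rightarrow> int) set" where
  "minkowski X Y = {(\<lambda>p. x p + y p) | x y. x \<in> X \<and> y \<in> Y}"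

end

theory Submission
  imports Defs
begin

definition inS :: "'a set \<Rightarrow> ('a \<Rightarrow> 'a \<Rightarrow> bool) \<Rightarrow> 'a set \<Rightarrow> 'a set \<Rightarrow> 'a set
    \<Rightarrow> ('a \<Rightarrow> int) \<Rightarrow> ('a \<Rightarrow> int) \<Rightarrow> bool" where
  "inS P lt A U1 U2 lam x \<longleftrightarrow> (\<forall>p. p \<notin> P - A \<longrightarrow> x p = 0)
     \<and> (\<forall>p\<in>P - A. 0 \<le> x p)
     \<and> (\<forall>p\<in>U1. \<forall>a\<in>A. lt p a \<longrightarrow> x p \<le> lam a)
     \<and> (\<forall>q\<in>U1. \<forall>b\<in>A. lt b q \<longrightarrow> lam b \<le> x q)
     \<and> (\<forall>p\<in>U1. \<forall>q\<in>U1. lt p q \<longrightarrow> x p \<le> x q)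
     \<and> (\<forall>a\<in>A \<union> U1. \<forall>b\<in>A \<union> U1. \<forall>ps. ps \<noteq> [] \<longrightarrow> set ps \<subseteq> U2
          \<longrightarrow> sorted_wrt lt (b # ps @ [a])
          \<longrightarrow> sum_list (map x ps) \<le> mval U1 lam x a - mval U1 lam x b)
     \<and> (\<forall>q\<in>U1. \<forall>ps. ps \<noteq> [] \<longrightarrow> set ps \<subseteq> U2
          \<longrightarrow> sorted_wrt lt (ps @ [q])
          \<longrightarrow> sum_list (map x ps) \<le> x q)"

lemma of_int_sum_list_map: "real_of_int (sum_list (map x ps)) = sum_list (map (\<lambda>p. real_of_int (x p)) ps)"
  by (induction ps) auto

lemma mval_of_int: "mval U1 (\<lambda>q. real_of_int (lam q)) (\<lambda>p. real_of_int (x p)) a = real_of_int (mval U1 lam x a)"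
  by (simp add: mval_def)


lemma S_CO_iff:
  assumes "U2 \<subseteq> P - A"
  shows "x \<in> S_CO P lt A U1 U2 lam \<longleftrightarrow> inS P lt A U1 U2 lam x"
proof -
  have e1: "sum_list (map (\<lambda>p. real_of_int (x p)) ps) \<le> mval U1 (\<lambda>q. real_of_int (lam q)) (\<lambda>p. real_of_int (x p)) a
       - mval U1 (\<lambda>q. real_of_int (lam q)) (\<lambda>p. real_of_int (x p)) b
     \<longleftrightarrow> sum_list (map x ps) \<le> mval U1 lam x a - mval U1 lam x b" for ps a b
    by (simp only: mval_of_int flip: of_int_sum_list_map of_int_diff) (rule of_int_le_iff)
  have e2: "sum_list (map (\<lambda>p. real_of_int (x p)) ps) \<le> real_of_int (x q)
     \<longleftrightarrow> sum_list (map x ps) \<le> x q" for ps q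
    by (simp only: flip: of_int_sum_list_map) (rule of_int_le_iff)
  show ?thesis
    unfolding S_CO_def CO_def inS_def mem_Collect_eq e1 e2 using assms
    by (auto simp: subset_iff)
qed


lemma sorted_wrt_last:
  assumes "sorted_wrt R xs" "xs \<noteq> []" "e \<in> set xs"
  shows "e = last xs \<or> R e (last xs)"
proof -
  have "xs = butlast xs @ [last xs]" using assms(2) by simp
  then have "sorted_wrt R (butlast xs @ [last xs])" using assms(1) by simp
  then have "\<forall>x\<in>set (butlast xs). R x (last xs)" by (simp add: sorted_wrt_append)
  moreover have "e \<in> set (butlast xs) \<or> e = last xs"
    using assms(2,3) by (metis in_set_butlast_appendI append_butlast_last_id set_ConsD set_append Un_iff list.set(1) empty_iff set_simps(2))
  ultimately show ?thesis by blast
qed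

lemma sorted_wrt_distinct:
  assumes "sorted_wrt R xs" "\<forall>x\<in>set xs. \<not> R x x"
  shows "distinct xs"
  using assms by (induction xs) auto

locale mpos =
  fixes P :: "'a set" and lt :: "'a \<Rightarrow> 'a \<Rightarrow> bool" and A U1 U2 :: "'a set"
  assumes fin: "finite P"
    and irr: "\<forall>p\<in>P. \<not> lt p p"
    and trn: "\<forall>p\<in>P. \<forall>q\<in>P. \<forall>r\<in>P. lt p q \<longrightarrow> lt q r \<longrightarrow> lt p r"
    and AP: "A \<subseteq> P"
    and minA: "\<forall>p. minimal_elt P lt p \<longrightarrow> p \<in> A"
    and disj: "U1 \<inter> U2 = {}"
    and un: "U1 \<union> U2 = P - A"
    and lin: "\<forall>a\<in>A. \<forall>b\<in>A. a = b \<or> lt a b \<or> lt b a"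
begin

lemma U1P: "U1 \<subseteq> P - A" and U2P: "U2 \<subseteq> P - A" using un by auto

lemma min_below:
  assumes "p \<in> P"
  shows "\<exists>m\<in>A. m = p \<or> lt m p"
proof -
  define R where "R = {(q, r). q \<in> P \<and> r \<in> P \<and> lt q r}"
  have finR: "finite R" unfolding R_def
    by (rule finite_subset[of _ "P \<times> P"]) (auto simp: fin)
  have trR: "trans R" unfolding R_def trans_def using trn by blast
  have nR: "\<forall>x. (x, x) \<notin> R" unfolding R_def using irr by auto
  have acR: "acyclic R" unfolding acyclic_def using nR trancl_id[OF trR] by simp
  have wfR: "wf R" by (rule finite_acyclic_wf[OF finR acR])
  define Q where "Q = {m \<in> P. m = p \<or> lt m p}"
  have "p \<in> Q" unfolding Q_def using assms by simp
  then obtain m where m: "m \<in> Q" "\<And>y. (y, m) \<in> R \<Longrightarrow> y \<notin> Q"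
    using wfE_min[OF wfR] by blast
  have "minimal_elt P lt m"
    unfolding minimal_elt_def
  proof (intro conjI ballI)
    show "m \<in> P" using m(1) Q_def by simp
    fix q assume q: "q \<in> P"
    show "\<not> lt q m"
    proof
      assume l: "lt q m"
      then have "(q, m) \<in> R" using q m(1) unfolding R_def Q_def by simp
      moreover have "q \<in> Q" using l q m(1) trn assms unfolding Q_def by blast
      ultimately show False using m(2) by blast
    qed
  qed
  then have "m \<in> A" using minA by blast
  then show ?thesis using m(1) Q_def by blast
qed

lemma below_U2:
  assumes "p \<in> P - A"
  shows "\<exists>m\<in>A. lt m p"
  using min_below[of p] assms by auto

lemma inS_intro:
  assumes lam0: "\<forall>a\<in>A. 0 \<le> lam a"
    and s: "\<forall>p. p \<notin> P - A \<longrightarrow> x p = 0"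
    and n: "\<forall>p\<in>P - A. 0 \<le> x p"
    and i: "\<forall>p\<in>U1. \<forall>a\<in>A. lt p a \<longrightarrow> x p \<le> lam a"
    and ii: "\<forall>q\<in>U1. \<forall>b\<in>A. lt b q \<longrightarrow> lam b \<le> x q"
    and iii: "\<forall>p\<in>U1. \<forall>q\<in>U1. lt p q \<longrightarrow> x p \<le> x q"
    and v: "\<forall>a\<in>A \<union> U1. \<forall>b\<in>A \<union> U1. \<forall>ps. ps \<noteq> [] \<longrightarrow> set ps \<subseteq> U2
          \<longrightarrow> sorted_wrt lt (b # ps @ [a])
          \<longrightarrow> sum_list (map x ps) \<le> mval U1 lam x a - mval U1 lam x b"
  shows "inS P lt A U1 U2 lam x"
proof -
  have vi: "sum_list (map x ps) \<le> x q"
    if q: "q \<in> U1" and ps: "ps \<noteq> []" "set ps \<subseteq> U2" "sorted_wrt lt (ps @ [q])" for q ps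
  proof -
    have h: "hd ps \<in> U2" using ps by auto
    then obtain m where m: "m \<in> A" "lt m (hd ps)" using below_U2 U2P by blast
    have "\<forall>e\<in>set (ps @ [q]). e = hd ps \<or> lt (hd ps) e"
      using ps(1,3) by (cases ps) auto
    moreover have "set (ps @ [q]) \<subseteq> P" using ps(2) q U2P U1P by auto
    moreover have "m \<in> P" "hd ps \<in> P" using m AP h U2P by auto
    ultimately have "\<forall>e\<in>set (ps @ [q]). lt m e"
      using trn m(2) by (metis subsetD)
    then have "sorted_wrt lt (m # ps @ [q])" using ps(3) by simp
    then have "sum_list (map x ps) \<le> mval U1 lam x q - mval U1 lam x m"
      using v q m ps by blast
    moreover have "mval U1 lam x q = x q" using q by (simp add: mval_def)
    moreover have "mval U1 lam x m = lam m" using m U1P by (auto simp: mval_def)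
    ultimately show ?thesis using lam0 m by fastforce
  qed
  show ?thesis unfolding inS_def using assms vi by blast
qed


lemma inS_cong:
  assumes "\<forall>a\<in>A. lam a = lam' a"
  shows "inS P lt A U1 U2 lam x = inS P lt A U1 U2 lam' x"
proof -
  have m: "\<forall>a\<in>A \<union> U1. mval U1 lam x a = mval U1 lam' x a"
    using assms by (auto simp: mval_def)
  show ?thesis unfolding inS_def using assms m by auto
qed

lemma inS_add:
  assumes x: "inS P lt A U1 U2 lam x" and y: "inS P lt A U1 U2 mu y"
  shows "inS P lt A U1 U2 (\<lambda>a. lam a + mu a) (\<lambda>p. x p + y p)"
proof -
  have mv: "mval U1 (\<lambda>a. lam a + mu a) (\<lambda>p. x p + y p) a = mval U1 lam x a + mval U1 mu y a" for a
    by (simp add: mval_def)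
  have sl: "sum_list (map (\<lambda>p. x p + y p) ps) = sum_list (map x ps) + sum_list (map y ps)" for ps
    by (induction ps) auto
  show ?thesis
    unfolding inS_def mv sl
  proof (intro conjI)
    show "\<forall>a\<in>A \<union> U1. \<forall>b\<in>A \<union> U1. \<forall>ps. ps \<noteq> [] \<longrightarrow> set ps \<subseteq> U2 \<longrightarrow> sorted_wrt lt (b # ps @ [a]) \<longrightarrow>
        sum_list (map x ps) + sum_list (map y ps) \<le> mval U1 lam x a + mval U1 mu y a - (mval U1 lam x b + mval U1 mu y b)"
    proof (intro ballI allI impI)
      fix a b ps assume h: "a \<in> A \<union> U1" "b \<in> A \<union> U1" "ps \<noteq> []" "set ps \<subseteq> U2" "sorted_wrt lt (b # ps @ [a])"
      have "sum_list (map x ps) \<le> mval U1 lam x a - mval U1 lam x b" using x h unfolding inS_def by blast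
      moreover have "sum_list (map y ps) \<le> mval U1 mu y a - mval U1 mu y b" using y h unfolding inS_def by blast
      ultimately show "sum_list (map x ps) + sum_list (map y ps) \<le> mval U1 lam x a + mval U1 mu y a - (mval U1 lam x b + mval U1 mu y b)"
        by simp
    qed
    show "\<forall>q\<in>U1. \<forall>ps. ps \<noteq> [] \<longrightarrow> set ps \<subseteq> U2 \<longrightarrow> sorted_wrt lt (ps @ [q]) \<longrightarrow>
        sum_list (map x ps) + sum_list (map y ps) \<le> x q + y q"
    proof (intro ballI allI impI)
      fix q ps assume h: "q \<in> U1" "ps \<noteq> []" "set ps \<subseteq> U2" "sorted_wrt lt (ps @ [q])"
      have "sum_list (map x ps) \<le> x q" using x h unfolding inS_def by blast
      moreover have "sum_list (map y ps) \<le> y q" using y h unfolding inS_def by blast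
      ultimately show "sum_list (map x ps) + sum_list (map y ps) \<le> x q + y q" by simp
    qed
  qed (use x y in \<open>auto simp: inS_def intro: add_mono\<close>)
qed

lemma inS_zero:
  assumes "\<forall>a\<in>A. mu a = 0"
  shows "inS P lt A U1 U2 mu (\<lambda>p. 0)"
proof -
  have "sum_list (map (\<lambda>p. 0::int) ps) = 0" for ps by (induction ps) auto
  moreover have "\<forall>a\<in>A \<union> U1. mval U1 mu (\<lambda>p. 0) a = 0" using assms by (auto simp: mval_def)
  ultimately show ?thesis unfolding inS_def using assms by auto
qed

end


lemma tele:
  fixes g F :: "'a \<Rightarrow> int"
  assumes "\<And>u v. u \<in> set (b # ps) \<Longrightarrow> v \<in> set ps \<Longrightarrow> R u v \<Longrightarrow> g v \<le> F v - F u"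
    and "\<And>u. u \<in> set ps \<Longrightarrow> R u a \<Longrightarrow> F u \<le> F a"
    and "sorted_wrt R (b # ps @ [a])" and "ps \<noteq> []"
  shows "sum_list (map g ps) \<le> F a - F b"
  using assms
proof (induction ps arbitrary: b)
  case Nil then show ?case by simp
next
  case (Cons v ps)
  have gv: "g v \<le> F v - F b" using Cons.prems(1)[of b v] Cons.prems(3) by simp
  show ?case
  proof (cases "ps = []")
    case True
    then have "F v \<le> F a" using Cons.prems(2)[of v] Cons.prems(3) by simp
    then show ?thesis using gv True by simp
  next
    case False
    have "sum_list (map g ps) \<le> F a - F v"
    proof (rule Cons.IH)
      show "\<And>u w. u \<in> set (v # ps) \<Longrightarrow> w \<in> set ps \<Longrightarrow> R u w \<Longrightarrow> g w \<le> F w - F u"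
        using Cons.prems(1) by simp
      show "\<And>u. u \<in> set ps \<Longrightarrow> R u a \<Longrightarrow> F u \<le> F a" using Cons.prems(2) by simp
      show "sorted_wrt R (v # ps @ [a])" using Cons.prems(3) by simp
      show "ps \<noteq> []" by fact
    qed
    then show ?thesis using gv by simp
  qed
qed

locale keyctx = mpos +
  fixes lam :: "'a \<Rightarrow> int" and T :: "'a set" and z :: "'a \<Rightarrow> int"
  assumes lam0: "\<forall>a\<in>A. 0 \<le> lam a"
    and lammono: "\<forall>a\<in>A. \<forall>b\<in>A. lt a b \<longrightarrow> lam a \<le> lam b"
    and TA: "T \<subseteq> A"
    and Tup: "\<forall>a\<in>T. \<forall>b\<in>A. lt a b \<longrightarrow> b \<in> T"
    and Tne: "T \<noteq> {}"
    and zS: "inS P lt A U1 U2 (\<lambda>a. lam a + (if a \<in> T then 1 else 0)) z"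
begin

definition om :: "'a \<Rightarrow> int" where "om a = (if a \<in> T then 1 else 0)"
definition nu :: "'a \<Rightarrow> int" where "nu a = lam a + om a"
definition cc :: int where "cc = Min (nu ` T)"
definition CH :: "'a \<Rightarrow> ('a \<times> 'a list) set" where
  "CH q = {(b, ps). b \<in> A \<union> U1 \<and> ps \<noteq> [] \<and> set ps \<subseteq> U2 \<and> sorted_wrt lt (b # ps) \<and> last ps = q}"
definition cv :: "'a \<times> 'a list \<Rightarrow> int" where
  "cv bp = mval U1 nu z (fst bp) + sum_list (map z (snd bp))"
definition HH :: "'a \<Rightarrow> int" where
  "HH q = (if q \<in> A \<union> U1 then mval U1 nu z q else Max (cv ` CH q))"
definition WW :: "'a \<Rightarrow> int" where "WW q = (if cc \<le> HH q then 1 else 0)"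
definition yv :: "'a \<Rightarrow> int" where
  "yv p = (if p \<in> U1 then (if cc \<le> z p then 1 else 0)
     else if p \<in> U2 then (if HH p - z p < cc \<and> cc \<le> HH p then 1 else 0) else 0)"
definition xv :: "'a \<Rightarrow> int" where "xv p = z p - yv p"

lemma zS': "inS P lt A U1 U2 nu z"
  using zS unfolding nu_def om_def .

lemmas zall = zS'[unfolded inS_def]

lemma z_supp: "p \<notin> P - A \<Longrightarrow> z p = 0" using zall[THEN conjunct1] by blast
lemma z_nn: "p \<in> P - A \<Longrightarrow> 0 \<le> z p" using zall[THEN conjunct2, THEN conjunct1] by blast
lemma z_i: "p \<in> U1 \<Longrightarrow> a \<in> A \<Longrightarrow> lt p a \<Longrightarrow> z p \<le> nu a"
  using zall[THEN conjunct2, THEN conjunct2, THEN conjunct1] by blast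
lemma z_ii: "q \<in> U1 \<Longrightarrow> b \<in> A \<Longrightarrow> lt b q \<Longrightarrow> nu b \<le> z q"
  using zall[THEN conjunct2, THEN conjunct2, THEN conjunct2, THEN conjunct1] by blast
lemma z_iii: "p \<in> U1 \<Longrightarrow> q \<in> U1 \<Longrightarrow> lt p q \<Longrightarrow> z p \<le> z q"
  using zall[THEN conjunct2, THEN conjunct2, THEN conjunct2, THEN conjunct2, THEN conjunct1] by blast
lemma z_v: "a \<in> A \<union> U1 \<Longrightarrow> b \<in> A \<union> U1 \<Longrightarrow> ps \<noteq> [] \<Longrightarrow> set ps \<subseteq> U2 \<Longrightarrow> sorted_wrt lt (b # ps @ [a])
     \<Longrightarrow> sum_list (map z ps) \<le> mval U1 nu z a - mval U1 nu z b"
  using zall[THEN conjunct2, THEN conjunct2, THEN conjunct2, THEN conjunct2, THEN conjunct2, THEN conjunct1] by blast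

lemma finT: "finite T" using finite_subset[OF subset_trans[OF TA AP] fin] .

lemma c1: "a \<in> T \<Longrightarrow> cc \<le> nu a"
  unfolding cc_def using finT by (intro Min_le) auto

lemma c2: assumes "a \<in> A" "a \<notin> T" shows "nu a \<le> cc - 1"
proof -
  have "\<forall>t\<in>T. nu a \<le> nu t - 1"
  proof
    fix t assume t: "t \<in> T"
    have "t \<in> A" using t TA by auto
    then have "lt a t" using lin assms t Tup by metis
    then have "lam a \<le> lam t" using lammono assms \<open>t \<in> A\<close> by blast
    then show "nu a \<le> nu t - 1" using assms t by (simp add: nu_def om_def)
  qed
  moreover have "cc \<in> nu ` T" unfolding cc_def using finT Tne by simp
  ultimately show ?thesis by auto
qed

lemma c3: "1 \<le> cc"
proof -
  have "cc \<in> nu ` T" unfolding cc_def using finT Tne by simp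
  then obtain t where "t \<in> T" "cc = nu t" by auto
  then show ?thesis using lam0 TA by (auto simp: nu_def om_def)
qed

lemma nu_c: "a \<in> A \<Longrightarrow> (cc \<le> nu a) = (a \<in> T)"
  using c1 c2 by force

lemma finCH: "finite (CH q)"
proof -
  have "CH q \<subseteq> (A \<union> U1) \<times> {ps. set ps \<subseteq> P \<and> length ps \<le> card P}"
  proof
    fix bp assume "bp \<in> CH q"
    then obtain b ps where bp: "bp = (b, ps)" "b \<in> A \<union> U1" "set ps \<subseteq> U2" "sorted_wrt lt (b # ps)"
      unfolding CH_def by auto
    have sP: "set ps \<subseteq> P" using bp U2P by auto
    have "distinct ps" using sorted_wrt_distinct[of lt ps] bp(4) irr sP by auto
    then have "length ps \<le> card P" using sP fin by (metis card_mono distinct_card)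
    then show "bp \<in> (A \<union> U1) \<times> {ps. set ps \<subseteq> P \<and> length ps \<le> card P}" using bp sP by auto
  qed
  moreover have "finite ((A \<union> U1) \<times> {ps. set ps \<subseteq> P \<and> length ps \<le> card P})"
    using fin AP U1P finite_subset finite_lists_length_le[OF fin] by (intro finite_cartesian_product) auto
  ultimately show ?thesis using finite_subset by blast
qed

lemma neCH: assumes "q \<in> U2" shows "CH q \<noteq> {}"
proof -
  obtain m where "m \<in> A" "lt m q" using below_U2 assms U2P by blast
  then have "(m, [q]) \<in> CH q" unfolding CH_def using assms by auto
  then show ?thesis by blast
qed

lemma HH_attain: assumes "q \<in> U2" shows "\<exists>b ps. (b, ps) \<in> CH q \<and> HH q = cv (b, ps)"
proof -
  have "q \<notin> A \<union> U1" using assms disj U2P by auto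
  then have "HH q = Max (cv ` CH q)" by (simp add: HH_def)
  moreover have "Max (cv ` CH q) \<in> cv ` CH q" using finCH neCH[OF assms] by simp
  ultimately show ?thesis by auto
qed

lemma HH_ge: assumes "q \<in> U2" "(b, ps) \<in> CH q" shows "cv (b, ps) \<le> HH q"
proof -
  have "q \<notin> A \<union> U1" using assms disj U2P by auto
  then have "HH q = Max (cv ` CH q)" by (simp add: HH_def)
  then show ?thesis using finCH assms by simp
qed

lemma CH_below:
  assumes "(b, ps) \<in> CH q" "e \<in> set (b # ps)"
  shows "e = q \<or> lt e q"
proof -
  have "sorted_wrt lt (b # ps)" "last (b # ps) = q" using assms(1) unfolding CH_def by auto
  then show ?thesis using sorted_wrt_last[of lt "b # ps" e] assms(2) by auto
qed

lemma CH_P: assumes "(b, ps) \<in> CH q" shows "set (b # ps) \<subseteq> P"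
  using assms U1P U2P AP unfolding CH_def by auto

lemma CH_ext:
  assumes "(b, ps) \<in> CH q" "q \<in> P" "a \<in> P" "lt q a"
  shows "sorted_wrt lt (b # ps @ [a])"
proof -
  have "\<forall>e\<in>set (b # ps). lt e a"
  proof
    fix e assume e: "e \<in> set (b # ps)"
    then have "e \<in> P" using CH_P assms(1) by auto
    then show "lt e a" using CH_below[OF assms(1) e] trn assms(2,3,4) by blast
  qed
  moreover have "sorted_wrt lt (b # ps)" using assms(1) unfolding CH_def by auto
  ultimately have "sorted_wrt lt ((b # ps) @ [a])" by (simp add: sorted_wrt_append)
  then show ?thesis by simp
qed

lemma F1: assumes v: "v \<in> U2" and u: "u \<in> P" and l: "lt u v" shows "HH u + z v \<le> HH v"
proof (cases "u \<in> A \<union> U1")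
  case True
  then have "(u, [v]) \<in> CH v" unfolding CH_def using v l by auto
  then have "cv (u, [v]) \<le> HH v" using HH_ge v by blast
  then show ?thesis using True by (simp add: cv_def HH_def)
next
  case False
  then have uU2: "u \<in> U2" using u un by auto
  obtain b ps where bp: "(b, ps) \<in> CH u" "HH u = cv (b, ps)" using HH_attain[OF uU2] by blast
  have vP: "v \<in> P" using v U2P by auto
  have "sorted_wrt lt (b # ps @ [v])" using CH_ext[OF bp(1) u vP l] .
  moreover have "b \<in> A \<union> U1" "set ps \<subseteq> U2" using bp(1) unfolding CH_def by auto
  ultimately have "(b, ps @ [v]) \<in> CH v" using v unfolding CH_def by simp
  then have "cv (b, ps @ [v]) \<le> HH v" using HH_ge v by blast
  then show ?thesis using bp(2) by (simp add: cv_def)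
qed

lemma F2: assumes v: "v \<in> U2" and a: "a \<in> A \<union> U1" and l: "lt v a" shows "HH v \<le> HH a"
proof -
  obtain b ps where bp: "(b, ps) \<in> CH v" "HH v = cv (b, ps)" using HH_attain[OF v] by blast
  have vP: "v \<in> P" using v U2P by auto
  have aP: "a \<in> P" using a AP U1P by auto
  have s: "sorted_wrt lt (b # ps @ [a])" using CH_ext[OF bp(1) vP aP l] .
  have "sum_list (map z ps) \<le> mval U1 nu z a - mval U1 nu z b"
  proof -
    have "b \<in> A \<union> U1" "set ps \<subseteq> U2" "ps \<noteq> []" using bp(1) unfolding CH_def by auto
    then show ?thesis using z_v[OF a _ _ _ s] by blast
  qed
  then show ?thesis using bp(2) a by (simp add: cv_def HH_def)
qed


lemma HH_A1: "a \<in> A \<union> U1 \<Longrightarrow> HH a = mval U1 nu z a" by (simp add: HH_def)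

lemma U2_notU1: "v \<in> U2 \<Longrightarrow> v \<notin> U1" using disj by auto
lemma A_notU1: "a \<in> A \<Longrightarrow> a \<notin> U1" using U1P by auto

lemma yv_U2: "v \<in> U2 \<Longrightarrow> yv v = (if HH v - z v < cc \<and> cc \<le> HH v then 1 else 0)"
  using U2_notU1 by (simp add: yv_def)

lemma WW_y: assumes "a \<in> A \<union> U1" shows "WW a = mval U1 om yv a"
proof (cases "a \<in> U1")
  case True then show ?thesis by (simp add: WW_def HH_def mval_def yv_def)
next
  case False
  then have "a \<in> A" using assms by auto
  then show ?thesis using False nu_c[of a] by (simp add: WW_def HH_def mval_def om_def)
qed

lemma WW_x: assumes "a \<in> A \<union> U1" shows "HH a - WW a = mval U1 lam xv a"
proof (cases "a \<in> U1")
  case True then show ?thesis by (simp add: WW_def HH_def mval_def yv_def xv_def)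
next
  case False
  then have "a \<in> A" using assms by auto
  then show ?thesis using False nu_c[of a] by (simp add: WW_def HH_def mval_def om_def nu_def)
qed

lemma setP: "b \<in> A \<union> U1 \<Longrightarrow> set ps \<subseteq> U2 \<Longrightarrow> u \<in> set (b # ps) \<Longrightarrow> u \<in> P"
  using AP U1P U2P by auto

lemma yS: "inS P lt A U1 U2 om yv"
proof (rule inS_intro)
  show "\<forall>a\<in>A. 0 \<le> om a" by (simp add: om_def)
  show "\<forall>p. p \<notin> P - A \<longrightarrow> yv p = 0" using U1P U2P by (auto simp: yv_def)
  show "\<forall>p\<in>P - A. 0 \<le> yv p" by (simp add: yv_def)
  show "\<forall>p\<in>U1. \<forall>a\<in>A. lt p a \<longrightarrow> yv p \<le> om a"
  proof (intro ballI impI)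
    fix p a assume h: "p \<in> U1" "a \<in> A" "lt p a"
    have "z p \<le> nu a" using z_i h by blast
    then show "yv p \<le> om a" using h nu_c[of a] by (auto simp: yv_def om_def)
  qed
  show "\<forall>q\<in>U1. \<forall>b\<in>A. lt b q \<longrightarrow> om b \<le> yv q"
  proof (intro ballI impI)
    fix q b assume h: "q \<in> U1" "b \<in> A" "lt b q"
    have "nu b \<le> z q" using z_ii h by blast
    then show "om b \<le> yv q" using h nu_c[of b] by (auto simp: yv_def om_def)
  qed
  show "\<forall>p\<in>U1. \<forall>q\<in>U1. lt p q \<longrightarrow> yv p \<le> yv q"
  proof (intro ballI impI)
    fix p q assume h: "p \<in> U1" "q \<in> U1" "lt p q"
    have "z p \<le> z q" using z_iii h by blast
    then show "yv p \<le> yv q" using h by (auto simp: yv_def)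
  qed
  show "\<forall>a\<in>A \<union> U1. \<forall>b\<in>A \<union> U1. \<forall>ps. ps \<noteq> [] \<longrightarrow> set ps \<subseteq> U2 \<longrightarrow> sorted_wrt lt (b # ps @ [a]) \<longrightarrow>
      sum_list (map yv ps) \<le> mval U1 om yv a - mval U1 om yv b"
  proof (intro ballI allI impI)
    fix a b ps assume a: "a \<in> A \<union> U1" and b: "b \<in> A \<union> U1" and ps: "ps \<noteq> []" "set ps \<subseteq> U2"
      and s: "sorted_wrt lt (b # ps @ [a])"
    have "sum_list (map yv ps) \<le> WW a - WW b"
    proof (rule tele[where R = lt, OF _ _ s ps(1)])
      fix u v assume u: "u \<in> set (b # ps)" and v: "v \<in> set ps" and l: "lt u v"
      have uP: "u \<in> P" using setP[OF b ps(2) u] .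
      have vU: "v \<in> U2" using v ps(2) by auto
      have f: "HH u + z v \<le> HH v" using F1[OF vU uP l] .
      have zn: "0 \<le> z v" using z_nn vU U2P by auto
      show "yv v \<le> WW v - WW u" using f zn yv_U2[OF vU] by (auto simp: WW_def)
    next
      fix u assume u: "u \<in> set ps" and l: "lt u a"
      have "HH u \<le> HH a" using F2[OF _ a l] u ps(2) by auto
      then show "WW u \<le> WW a" by (auto simp: WW_def)
    qed
    then show "sum_list (map yv ps) \<le> mval U1 om yv a - mval U1 om yv b"
      using WW_y[OF a] WW_y[OF b] by simp
  qed
qed

lemma xS: "inS P lt A U1 U2 lam xv"
proof (rule inS_intro)
  show "\<forall>a\<in>A. 0 \<le> lam a" using lam0 .
  show "\<forall>p. p \<notin> P - A \<longrightarrow> xv p = 0" using U1P U2P z_supp by (auto simp: yv_def xv_def)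
  show "\<forall>p\<in>P - A. 0 \<le> xv p"
  proof
    fix p assume p: "p \<in> P - A"
    have zn: "0 \<le> z p" using z_nn p by auto
    show "0 \<le> xv p"
    proof (cases "p \<in> U1")
      case True then show ?thesis using zn c3 by (auto simp: xv_def yv_def)
    next
      case False
      then have "p \<in> U2" using p un by auto
      then show ?thesis using zn yv_U2[of p] by (auto simp: xv_def)
    qed
  qed
  show "\<forall>p\<in>U1. \<forall>a\<in>A. lt p a \<longrightarrow> xv p \<le> lam a"
  proof (intro ballI impI)
    fix p a assume h: "p \<in> U1" "a \<in> A" "lt p a"
    have "z p \<le> nu a" using z_i h by blast
    then show "xv p \<le> lam a" using h nu_c[of a] by (auto simp: xv_def yv_def nu_def om_def)
  qed
  show "\<forall>q\<in>U1. \<forall>b\<in>A. lt b q \<longrightarrow> lam b \<le> xv q"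
  proof (intro ballI impI)
    fix q b assume h: "q \<in> U1" "b \<in> A" "lt b q"
    have "nu b \<le> z q" using z_ii h by blast
    then show "lam b \<le> xv q" using h nu_c[of b] by (auto simp: xv_def yv_def nu_def om_def)
  qed
  show "\<forall>p\<in>U1. \<forall>q\<in>U1. lt p q \<longrightarrow> xv p \<le> xv q"
  proof (intro ballI impI)
    fix p q assume h: "p \<in> U1" "q \<in> U1" "lt p q"
    have "z p \<le> z q" using z_iii h by blast
    then show "xv p \<le> xv q" using h by (auto simp: xv_def yv_def)
  qed
  show "\<forall>a\<in>A \<union> U1. \<forall>b\<in>A \<union> U1. \<forall>ps. ps \<noteq> [] \<longrightarrow> set ps \<subseteq> U2 \<longrightarrow> sorted_wrt lt (b # ps @ [a]) \<longrightarrow>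
      sum_list (map xv ps) \<le> mval U1 lam xv a - mval U1 lam xv b"
  proof (intro ballI allI impI)
    fix a b ps assume a: "a \<in> A \<union> U1" and b: "b \<in> A \<union> U1" and ps: "ps \<noteq> []" "set ps \<subseteq> U2"
      and s: "sorted_wrt lt (b # ps @ [a])"
    have "sum_list (map xv ps) \<le> (\<lambda>q. HH q - WW q) a - (\<lambda>q. HH q - WW q) b"
    proof (rule tele[where R = lt, OF _ _ s ps(1)])
      fix u v assume u: "u \<in> set (b # ps)" and v: "v \<in> set ps" and l: "lt u v"
      have uP: "u \<in> P" using setP[OF b ps(2) u] .
      have vU: "v \<in> U2" using v ps(2) by auto
      have f: "HH u + z v \<le> HH v" using F1[OF vU uP l] .
      have zn: "0 \<le> z v" using z_nn vU U2P by auto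
      show "xv v \<le> (HH v - WW v) - (HH u - WW u)"
        using f zn yv_U2[OF vU] by (auto simp: WW_def xv_def)
    next
      fix u assume u: "u \<in> set ps" and l: "lt u a"
      have "HH u \<le> HH a" using F2[OF _ a l] u ps(2) by auto
      then show "HH u - WW u \<le> HH a - WW a" by (auto simp: WW_def)
    qed
    then show "sum_list (map xv ps) \<le> mval U1 lam xv a - mval U1 lam xv b"
      using WW_x[OF a] WW_x[OF b] by simp
  qed
qed

lemma key_split: "\<exists>x y. inS P lt A U1 U2 lam x \<and> inS P lt A U1 U2 om y \<and> z = (\<lambda>p. x p + y p)"
  using xS yS by (intro exI[of _ xv] exI[of _ yv]) (auto simp: xv_def)

end


context mpos
begin

lemma split_main:
  assumes "\<forall>a\<in>A. 0 \<le> mu a" "\<forall>a\<in>A. \<forall>b\<in>A. lt a b \<longrightarrow> mu a \<le> mu b"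
    "\<forall>a\<in>A. 0 \<le> lam a" "\<forall>a\<in>A. \<forall>b\<in>A. lt a b \<longrightarrow> lam a \<le> lam b"
    "inS P lt A U1 U2 (\<lambda>a. lam a + mu a) z"
  shows "\<exists>x y. inS P lt A U1 U2 lam x \<and> inS P lt A U1 U2 mu y \<and> z = (\<lambda>p. x p + y p)"
  using assms
proof (induction "\<Sum>a\<in>A. nat (mu a)" arbitrary: lam mu z rule: less_induct)
  case less
  have finA: "finite A" using finite_subset[OF AP fin] .
  show ?case
  proof (cases "\<forall>a\<in>A. mu a = 0")
    case True
    have eq0: "\<forall>a\<in>A. lam a + mu a = lam a" using True by simp
    have "inS P lt A U1 U2 lam z" using less.prems(5) inS_cong[OF eq0] by simp
    moreover have "inS P lt A U1 U2 mu (\<lambda>p. 0)" using inS_zero True by blast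
    ultimately show ?thesis by (intro exI[of _ z] exI[of _ "\<lambda>p. 0"]) simp
  next
    case False
    define T where "T = {a \<in> A. 0 < mu a}"
    define mu' where "mu' = (\<lambda>a. mu a - (if a \<in> T then 1 else 0))"
    define lam' where "lam' = (\<lambda>a. lam a + mu' a)"
    have Tne: "T \<noteq> {}" using False less.prems(1) unfolding T_def by force
    have mu'0: "\<forall>a\<in>A. 0 \<le> mu' a" using less.prems(1) by (auto simp: mu'_def T_def)
    have mu'm: "\<forall>a\<in>A. \<forall>b\<in>A. lt a b \<longrightarrow> mu' a \<le> mu' b"
    proof (intro ballI impI)
      fix a b assume h: "a \<in> A" "b \<in> A" "lt a b"
      have "mu a \<le> mu b" using less.prems(2) h by blast
      then show "mu' a \<le> mu' b" using h less.prems(1) by (auto simp: mu'_def T_def)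
    qed
    have k1: "\<forall>a\<in>A. 0 \<le> lam' a" using less.prems(3) mu'0 by (simp add: lam'_def)
    have k2: "\<forall>a\<in>A. \<forall>b\<in>A. lt a b \<longrightarrow> lam' a \<le> lam' b"
      using less.prems(4) mu'm by (simp add: lam'_def add_mono)
    have k3: "T \<subseteq> A" unfolding T_def by auto
    have k4: "\<forall>a\<in>T. \<forall>b\<in>A. lt a b \<longrightarrow> b \<in> T"
    proof (intro ballI impI)
      fix a b assume h: "a \<in> T" "b \<in> A" "lt a b"
      then have "a \<in> A" "0 < mu a" unfolding T_def by auto
      moreover have "mu a \<le> mu b" using less.prems(2) h(2,3) \<open>a \<in> A\<close> by blast
      ultimately show "b \<in> T" using h(2) unfolding T_def by auto
    qed
    have eqn: "\<forall>a\<in>A. lam a + mu a = lam' a + (if a \<in> T then 1 else 0)" by (simp add: lam'_def mu'_def)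
    have k6: "inS P lt A U1 U2 (\<lambda>a. lam' a + (if a \<in> T then 1 else 0)) z"
      using less.prems(5) inS_cong[OF eqn] by simp
    interpret k: keyctx P lt A U1 U2 lam' T z
      by (rule keyctx.intro[OF mpos_axioms]) (unfold keyctx_axioms_def, intro conjI; fact)
    have omT: "k.om = (\<lambda>a. if a \<in> T then 1 else 0)" by (rule ext) (simp add: k.om_def)
    obtain z1 y1 where z1: "inS P lt A U1 U2 lam' z1" and y1: "inS P lt A U1 U2 k.om y1"
      and zz: "z = (\<lambda>p. z1 p + y1 p)" using k.key_split by blast
    have lt: "(\<Sum>a\<in>A. nat (mu' a)) < (\<Sum>a\<in>A. nat (mu a))"
    proof (rule sum_strict_mono_ex1[OF finA])
      show "\<forall>a\<in>A. nat (mu' a) \<le> nat (mu a)" by (auto simp: mu'_def)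
      obtain t where "t \<in> T" using Tne by blast
      then show "\<exists>a\<in>A. nat (mu' a) < nat (mu a)" by (auto simp: mu'_def T_def)
    qed
    have z1': "inS P lt A U1 U2 (\<lambda>a. lam a + mu' a) z1" using z1 unfolding lam'_def .
    have "\<exists>x y. inS P lt A U1 U2 lam x \<and> inS P lt A U1 U2 mu' y \<and> z1 = (\<lambda>p. x p + y p)"
      by (rule less.hyps[OF lt mu'0 mu'm less.prems(3) less.prems(4) z1'])
    then obtain x y2 where x: "inS P lt A U1 U2 lam x" and y2: "inS P lt A U1 U2 mu' y2"
      and zz1: "z1 = (\<lambda>p. x p + y2 p)" by blast
    have "inS P lt A U1 U2 (\<lambda>a. mu' a + k.om a) (\<lambda>p. y2 p + y1 p)" using inS_add[OF y2 y1] .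
    moreover have eq2: "\<forall>a\<in>A. mu' a + k.om a = mu a" by (simp add: omT mu'_def)
    ultimately have "inS P lt A U1 U2 mu (\<lambda>p. y2 p + y1 p)" using inS_cong[OF eq2] by simp
    moreover have "z = (\<lambda>p. x p + (y2 p + y1 p))" using zz zz1 by (simp add: add.assoc)
    ultimately show ?thesis using x by blast
  qed
qed

end

theorem theorem2p5:
  fixes P A U1 U2 :: "'a set" and lt :: "'a \<Rightarrow> 'a \<Rightarrow> bool"
    and lam mu :: "'a \<Rightarrow> int"
  assumes "marked_poset P lt A lam"
    and "marking A lt mu"
    and "\<forall>a\<in>A. \<forall>b\<in>A. a = b \<or> lt a b \<or> lt b a"
    and "admissible_decomp P lt A U1 U2"
  shows "minkowski (S_CO P lt A U1 U2 lam) (S_CO P lt A U1 U2 mu)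
         = S_CO P lt A U1 U2 (\<lambda>a. lam a + mu a)"
proof -
  have mp: "strict_poset P lt" "A \<subseteq> P" "\<forall>p. minimal_elt P lt p \<longrightarrow> p \<in> A"
    using assms(1) unfolding marked_poset_def by blast+
  have sp: "finite P" "\<forall>p\<in>P. \<not> lt p p" "\<forall>p\<in>P. \<forall>q\<in>P. \<forall>r\<in>P. lt p q \<longrightarrow> lt q r \<longrightarrow> lt p r"
    using mp(1) unfolding strict_poset_def by blast+
  have ad: "U1 \<inter> U2 = {}" "U1 \<union> U2 = P - A" using assms(4) unfolding admissible_decomp_def by blast+
  interpret m: mpos P lt A U1 U2
    by (rule mpos.intro[OF sp mp(2) mp(3) ad assms(3)])
  have U2: "U2 \<subseteq> P - A" using m.U2P .
  have lm: "\<forall>a\<in>A. 0 \<le> lam a" "\<forall>a\<in>A. \<forall>b\<in>A. lt a b \<longrightarrow> lam a \<le> lam b"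
    using assms(1) unfolding marked_poset_def marking_def by auto
  have mm: "\<forall>a\<in>A. 0 \<le> mu a" "\<forall>a\<in>A. \<forall>b\<in>A. lt a b \<longrightarrow> mu a \<le> mu b"
    using assms(2) unfolding marking_def by auto
  show ?thesis
  proof
    show "minkowski (S_CO P lt A U1 U2 lam) (S_CO P lt A U1 U2 mu) \<subseteq> S_CO P lt A U1 U2 (\<lambda>a. lam a + mu a)"
    proof
      fix w assume "w \<in> minkowski (S_CO P lt A U1 U2 lam) (S_CO P lt A U1 U2 mu)"
      then obtain x y where w: "w = (\<lambda>p. x p + y p)" and x: "x \<in> S_CO P lt A U1 U2 lam"
        and y: "y \<in> S_CO P lt A U1 U2 mu" unfolding minkowski_def by blast
      have "inS P lt A U1 U2 (\<lambda>a. lam a + mu a) (\<lambda>p. x p + y p)"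
        using m.inS_add x y S_CO_iff[OF U2] by blast
      then show "w \<in> S_CO P lt A U1 U2 (\<lambda>a. lam a + mu a)" using w S_CO_iff[OF U2] by blast
    qed
    show "S_CO P lt A U1 U2 (\<lambda>a. lam a + mu a) \<subseteq> minkowski (S_CO P lt A U1 U2 lam) (S_CO P lt A U1 U2 mu)"
    proof
      fix z assume "z \<in> S_CO P lt A U1 U2 (\<lambda>a. lam a + mu a)"
      then have "inS P lt A U1 U2 (\<lambda>a. lam a + mu a) z" using S_CO_iff[OF U2] by blast
      then obtain x y where "inS P lt A U1 U2 lam x" "inS P lt A U1 U2 mu y" "z = (\<lambda>p. x p + y p)"
        using m.split_main[OF mm lm] by blast
      then show "z \<in> minkowski (S_CO P lt A U1 U2 lam) (S_CO P lt A U1 U2 mu)"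
        unfolding minkowski_def S_CO_iff[OF U2] by blast
    qed
  qed
qed

end
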